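(* Let $n\in\mathbb{N}$ and let $G=(V,E)$ be a simple undirected graph with vertex set $V=[n]=\{1,\dots,n\}$. Then there exist a face $F$ of the linear ordering polytope $\mathrm{LOP}(2n)$ and an affine map $\alpha$ with $\alpha(F)=\mathrm{STAB}(G)$, i.e. the stable set polytope $\mathrm{STAB}(G)$ is an affine projection of a face of $\mathrm{LOP}(2n)$.
   Context: For $m\in\mathbb{N}$, a linear order on $[m]$ is a set $L$ of ordered pairs $(i,j)$, $i\neq j$, such that for each pair $i\neq j$ exactly one of $(i,j),(j,i)$ lies in $L$, and $L$ is transitive ($(i,j),(j,k)\in L\Rightarrow (i,k)\in L$). Its characteristic vector $\mathbf{y}\in\{0,1\}^{m(m-1)/2}$ has coordinates $y_{ij}$, $1\le i<j\le m$, with $y_{ij}=1$ if $(i,j)\in L$ and $y_{ij}=0$ if $(j,i)\in L$. The linear ordering polytope $\mathrm{LOP}(m)$ is the convex hull of all such characteristic vectors. The stable set polytope of a graph $G=([n],E)$ is $\mathrm{STAB}(G)=\mathrm{conv}\{\mathbf{x}\in\{0,1\}^n : x_i+x_j\le 1 \text{ for every edge } \{i,j\}\in E\}$. A hyperplane $H$ is supporting for a polytope $P$ if $P\cap H\neq\emptyset$ and $P$ lies entirely on one side of $H$; a face of $P$ is the intersection of $P$ with one or several supporting hyperplanes. A polytope $Q$ is an (affine) projection of a polytope $P$ if there is an affine map $\alpha$ with $\alpha(P)=Q$. *)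

theory Defs
  imports Complex_Main
begin

text \<open>Points of R^I are represented as real-valued functions on an index type that
  vanish outside the finite coordinate set I.\<close>

definition conv :: "('i \<Rightarrow> real) set \<Rightarrow> ('i \<Rightarrow> real) set" where
  "conv S = {x. \<exists>T c. finite T \<and> T \<noteq> {} \<and> T \<subseteq> S \<and> (\<forall>v\<in>T. c v \<ge> 0) \<and>
       (\<Sum>v\<in>T. c v) = 1 \<and> x = (\<lambda>k. \<Sum>v\<in>T. c v * v k)}"

definition lop_idx :: "nat \<Rightarrow> (nat \<times> nat) set" where
  "lop_idx m = {(i, j). 1 \<le> i \<and> i < j \<and> j \<le> m}"

definition is_linear_order :: "nat \<Rightarrow> (nat \<times> nat) set \<Rightarrow> bool" where
  "is_linear_order m L \<longleftrightarrow>
     L \<subseteq> {(i, j). i \<in> {1..m} \<and> j \<in> {1..m} \<and> i \<noteq> j} \<and>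
     (\<forall>i\<in>{1..m}. \<forall>j\<in>{1..m}. i \<noteq> j \<longrightarrow> ((i, j) \<in> L \<longleftrightarrow> (j, i) \<notin> L)) \<and>
     (\<forall>i j k. (i, j) \<in> L \<longrightarrow> (j, k) \<in> L \<longrightarrow> (i, k) \<in> L)"

definition char_vec :: "nat \<Rightarrow> (nat \<times> nat) set \<Rightarrow> (nat \<times> nat \<Rightarrow> real)" where
  "char_vec m L = (\<lambda>p. if p \<in> lop_idx m \<and> p \<in> L then 1 else 0)"

definition LOP :: "nat \<Rightarrow> (nat \<times> nat \<Rightarrow> real) set" where
  "LOP m = conv {char_vec m L | L. is_linear_order m L}"

definition simple_graph :: "nat \<Rightarrow> nat set set \<Rightarrow> bool" where
  "simple_graph n E \<longleftrightarrow> (\<forall>e\<in>E. e \<subseteq> {1..n} \<and> card e = 2)"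

definition STAB :: "nat \<Rightarrow> nat set set \<Rightarrow> (nat \<Rightarrow> real) set" where
  "STAB n E = conv {x. (\<forall>k\<in>{1..n}. x k \<in> {0, 1}) \<and> (\<forall>k. k \<notin> {1..n} \<longrightarrow> x k = 0) \<and>
                      (\<forall>i j. {i, j} \<in> E \<longrightarrow> x i + x j \<le> 1)}"

text \<open>Hyperplane {x. a\<cdot>x = b} in R^I (a = 0 allowed so that P itself counts as a face), and supporting hyperplanes.\<close>
definition ip :: "'i set \<Rightarrow> ('i \<Rightarrow> real) \<Rightarrow> ('i \<Rightarrow> real) \<Rightarrow> real" where
  "ip I a x = (\<Sum>k\<in>I. a k * x k)"

definition supporting :: "'i set \<Rightarrow> ('i \<Rightarrow> real) set \<Rightarrow> ('i \<Rightarrow> real) \<Rightarrow> real \<Rightarrow> bool" where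
  "supporting I P a b \<longleftrightarrow> (\<exists>x\<in>P. ip I a x = b) \<and>
     ((\<forall>x\<in>P. ip I a x \<le> b) \<or> (\<forall>x\<in>P. ip I a x \<ge> b))"

definition is_face :: "'i set \<Rightarrow> ('i \<Rightarrow> real) set \<Rightarrow> ('i \<Rightarrow> real) set \<Rightarrow> bool" where
  "is_face I P F \<longleftrightarrow> (\<exists>H. finite H \<and> H \<noteq> {} \<and> (\<forall>(a, b)\<in>H. supporting I P a b) \<and>
      F = P \<inter> {x. \<forall>(a, b)\<in>H. ip I a x = b})"

definition affine_map :: "'i set \<Rightarrow> 'j set \<Rightarrow> (('i \<Rightarrow> real) \<Rightarrow> ('j \<Rightarrow> real)) \<Rightarrow> bool" where
  "affine_map I J \<alpha> \<longleftrightarrow> (\<exists>A c. \<forall>x. \<alpha> x = (\<lambda>k. if k \<in> J then c k + (\<Sum>p\<in>I. A k p * x p) else 0))"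

end

theory Submission
  imports Defs
begin

lemma conv_comb:
  assumes "finite T" "T \<noteq> {}" "\<forall>w\<in>T. c w \<ge> (0::real)" "sum c T = 1" "\<forall>w\<in>T. f w \<in> S"
  shows "(\<lambda>k. \<Sum>w\<in>T. c w * f w k) \<in> conv S"
proof -
  define c' where "c' u = sum c {w\<in>T. f w = u}" for u
  have s: "sum c' (f ` T) = 1"
    using sum.image_gen[OF assms(1), of c f] assms(4) by (simp add: c'_def)
  have e: "(\<Sum>w\<in>T. c w * f w k) = (\<Sum>u\<in>f ` T. c' u * u k)" for k
  proof -
    have "(\<Sum>w\<in>T. c w * f w k) = (\<Sum>u\<in>f ` T. \<Sum>w\<in>{w\<in>T. f w = u}. c w * f w k)"
      using sum.image_gen[OF assms(1), of "\<lambda>w. c w * f w k" f] .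
    also have "\<dots> = (\<Sum>u\<in>f ` T. c' u * u k)"
      unfolding c'_def sum_distrib_right by (intro sum.cong refl) auto
    finally show ?thesis .
  qed
  show ?thesis unfolding conv_def
    apply (rule CollectI)
    apply (rule exI[of _ "f ` T"], rule exI[of _ c'])
    using assms s e by (auto simp: c'_def intro!: sum_nonneg)
qed

definition alpha :: "nat \<Rightarrow> (nat \<times> nat \<Rightarrow> real) \<Rightarrow> nat \<Rightarrow> real" where
  "alpha n x = (\<lambda>k. if k \<in> {1..n} then 1 - x (k, n+k) else 0)"

lemma alpha_comb:
  assumes "sum c T = 1"
  shows "alpha n (\<lambda>k. \<Sum>w\<in>T. c w * w k) = (\<lambda>k. \<Sum>w\<in>T. c w * alpha n w k)"
proof
  fix k
  show "alpha n (\<lambda>k. \<Sum>w\<in>T. c w * w k) k = (\<Sum>w\<in>T. c w * alpha n w k)"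
  proof (cases "k \<in> {1..n}")
    case True
    have "(\<Sum>w\<in>T. c w * alpha n w k) = (\<Sum>w\<in>T. c w - c w * w (k, n+k))"
      using True by (simp add: alpha_def algebra_simps)
    also have "\<dots> = 1 - (\<Sum>w\<in>T. c w * w (k, n+k))"
      using assms by (simp add: sum_subtractf)
    finally show ?thesis using True by (simp add: alpha_def)
  next
    case False
    then have "alpha n w k = 0" for w :: "nat \<times> nat \<Rightarrow> real" by (auto simp add: alpha_def)
    with False show ?thesis unfolding alpha_def by auto
  qed
qed

lemma alpha_comb2:
  assumes "sum c T = 1"
  shows "alpha n (\<lambda>k. \<Sum>w\<in>T. c w * f w k) = (\<lambda>k. \<Sum>w\<in>T. c w * alpha n (f w) k)"
proof
  fix k
  show "alpha n (\<lambda>k. \<Sum>w\<in>T. c w * f w k) k = (\<Sum>w\<in>T. c w * alpha n (f w) k)"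
  proof (cases "k \<in> {1..n}")
    case True
    have "(\<Sum>w\<in>T. c w * alpha n (f w) k) = (\<Sum>w\<in>T. c w - c w * f w (k, n+k))"
      using True by (simp add: alpha_def algebra_simps)
    also have "\<dots> = 1 - (\<Sum>w\<in>T. c w * f w (k, n+k))"
      using assms by (simp add: sum_subtractf)
    finally show ?thesis using True by (simp add: alpha_def)
  next
    case False
    then have "alpha n (f w) k = 0" for w by (auto simp add: alpha_def)
    with False show ?thesis unfolding alpha_def by auto
  qed
qed

lemma alpha_affine: "affine_map (lop_idx (2 * n)) {1..n} (alpha n)"
  unfolding affine_map_def
proof (intro exI allI)
  fix x :: "nat \<times> nat \<Rightarrow> real"
  show "alpha n x = (\<lambda>k. if k \<in> {1..n} then (\<lambda>_. 1) k +
      (\<Sum>p\<in>lop_idx (2 * n). (\<lambda>k p. if p = (k, n+k) then -1 else 0) k p * x p) else 0)"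
  proof
    fix k
    have fin: "finite (lop_idx (2 * n))"
      by (rule finite_subset[of _ "{1..2*n} \<times> {1..2*n}"]) (auto simp: lop_idx_def)
    have "k \<in> {1..n} \<Longrightarrow> (k, n+k) \<in> lop_idx (2*n)" by (auto simp: lop_idx_def)
    moreover have "(\<Sum>p\<in>lop_idx (2 * n). (if p = (k, n+k) then -1 else 0) * x p)
       = (\<Sum>p\<in>lop_idx (2 * n). if p = (k, n+k) then - x p else 0)"
      by (intro sum.cong) auto
    ultimately show "alpha n x k = (if k \<in> {1..n} then (\<lambda>_. 1) k +
      (\<Sum>p\<in>lop_idx (2 * n). (\<lambda>k p. if p = (k, n+k) then -1 else 0) k p * x p) else 0)"
      using fin by (simp add: alpha_def sum.delta')
  qed
qed


definition rk :: "nat \<Rightarrow> (nat \<Rightarrow> real) \<Rightarrow> nat \<Rightarrow> nat" where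
  "rk n v i = (if i \<le> n then (if v i = 1 then 2 else 0) else (if v (i - n) = 1 then 1 else 3))"

definition lord :: "nat \<Rightarrow> (nat \<Rightarrow> real) \<Rightarrow> (nat \<times> nat) set" where
  "lord n v = {(i, j). i \<in> {1..2*n} \<and> j \<in> {1..2*n} \<and>
      (rk n v i < rk n v j \<or> (rk n v i = rk n v j \<and> i < j))}"

lemma lord_lin: "is_linear_order (2*n) (lord n v)"
  unfolding is_linear_order_def lord_def by auto

lemma lop_idx_fin: "finite (lop_idx m)"
  by (rule finite_subset[of _ "{1..m} \<times> {1..m}"]) (auto simp: lop_idx_def)

definition dl :: "nat \<times> nat \<Rightarrow> nat \<times> nat \<Rightarrow> real" where
  "dl p = (\<lambda>k. if k = p then 1 else 0)"

lemma ip_dl: "p \<in> lop_idx m \<Longrightarrow> ip (lop_idx m) (dl p) x = x p"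
  unfolding ip_def dl_def using lop_idx_fin[of m]
  by (simp add: if_distrib[of "\<lambda>t. t * _"] sum.delta' cong: if_cong)

lemma ip_zero: "ip I (\<lambda>_. 0) x = 0"
  unfolding ip_def by simp

lemma LV_01: "w \<in> {char_vec m L | L. is_linear_order m L} \<Longrightarrow> w p = 0 \<or> w p = 1"
  by (auto simp: char_vec_def)

lemma LOP_le1: assumes "x \<in> LOP m" shows "x p \<le> 1"
proof -
  from assms obtain T c where T: "finite T" "T \<subseteq> {char_vec m L | L. is_linear_order m L}"
    "\<forall>v\<in>T. c v \<ge> 0" "sum c T = 1" "x = (\<lambda>k. \<Sum>v\<in>T. c v * v k)"
    unfolding LOP_def conv_def by blast
  have "(\<Sum>v\<in>T. c v * v p) \<le> (\<Sum>v\<in>T. c v)"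
  proof (rule sum_mono)
    fix v assume "v \<in> T"
    then have "v p \<le> 1" "c v \<ge> 0" using T(2,3) LV_01[of v m p] by force+
    then show "c v * v p \<le> c v" by (simp add: mult_left_le)
  qed
  with T show ?thesis by simp
qed


definition SV :: "nat \<Rightarrow> nat set set \<Rightarrow> (nat \<Rightarrow> real) set" where
  "SV n E = {x. (\<forall>k\<in>{1..n}. x k \<in> {0, 1}) \<and> (\<forall>k. k \<notin> {1..n} \<longrightarrow> x k = 0) \<and>
                      (\<forall>i j. {i, j} \<in> E \<longrightarrow> x i + x j \<le> 1)}"

definition CC :: "nat \<Rightarrow> nat set set \<Rightarrow> (nat \<times> nat) set" where
  "CC n E = {p \<in> lop_idx (2*n). \<exists>i j. p = (i, n+j) \<and> {i, j} \<in> E}"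

lemma edge_range: assumes "simple_graph n E" "{i, j} \<in> E"
  shows "i \<in> {1..n}" "j \<in> {1..n}" "i \<noteq> j"
  using assms unfolding simple_graph_def by (fastforce)+

lemma gvec_C: assumes "simple_graph n E" "v \<in> SV n E" "p \<in> CC n E"
  shows "char_vec (2*n) (lord n v) p = 1"
proof -
  obtain i j where p: "p = (i, n+j)" "{i, j} \<in> E" "p \<in> lop_idx (2*n)"
    using assms(3) unfolding CC_def by blast
  have ij: "i \<in> {1..n}" "j \<in> {1..n}" using edge_range[OF assms(1) p(2)] by auto
  have v: "v i \<in> {0,1}" "v j \<in> {0,1}" "v i + v j \<le> 1"
    using assms(2) ij p(2) unfolding SV_def by auto
  have "(i, n+j) \<in> lord n v"
    using ij v unfolding lord_def rk_def by auto
  then show ?thesis using p unfolding char_vec_def by auto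
qed

lemma gvec_alpha: assumes "v \<in> SV n E"
  shows "alpha n (char_vec (2*n) (lord n v)) = v"
proof
  fix k
  show "alpha n (char_vec (2*n) (lord n v)) k = v k"
  proof (cases "k \<in> {1..n}")
    case True
    then have "(k, n+k) \<in> lop_idx (2*n)" by (auto simp: lop_idx_def)
    moreover have "v k \<in> {0,1}" using assms True unfolding SV_def by auto
    moreover have "rk n v k = (if v k = 1 then 2 else 0)" "rk n v (n+k) = (if v k = 1 then 1 else 3)"
      using True unfolding rk_def by auto
    moreover have "k \<in> {1..2*n}" "n+k \<in> {1..2*n}" using True by auto
    ultimately have "((k, n+k) \<in> lord n v) = (v k = 0)"
      unfolding lord_def by auto
    then show ?thesis using True \<open>(k, n+k) \<in> lop_idx (2*n)\<close> \<open>v k \<in> {0,1}\<close>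
      unfolding alpha_def char_vec_def by auto
  next
    case False
    then show ?thesis using assms unfolding alpha_def SV_def by auto
  qed
qed

lemma edge_alpha: assumes "simple_graph n E" "is_linear_order (2*n) L"
  "\<forall>p\<in>CC n E. char_vec (2*n) L p = 1"
  shows "alpha n (char_vec (2*n) L) \<in> SV n E"
proof -
  let ?w = "char_vec (2*n) L"
  have idx: "k \<in> {1..n} \<Longrightarrow> (k, n+k) \<in> lop_idx (2*n)" for k by (auto simp: lop_idx_def)
  have A: "\<forall>k\<in>{1..n}. alpha n ?w k \<in> {0, 1}"
    unfolding alpha_def char_vec_def by auto
  have B: "\<forall>k. k \<notin> {1..n} \<longrightarrow> alpha n ?w k = 0" unfolding alpha_def by auto
  have Cc: "alpha n ?w i + alpha n ?w j \<le> 1" if e: "{i, j} \<in> E" for i j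
  proof (rule ccontr)
    assume nc: "\<not> ?thesis"
    have ij: "i \<in> {1..n}" "j \<in> {1..n}" "i \<noteq> j" using edge_range[OF assms(1) e] by auto
    have "alpha n ?w i \<in> {0,1}" "alpha n ?w j \<in> {0,1}" using A ij by auto
    with nc have "alpha n ?w i = 1" "alpha n ?w j = 1" by auto
    then have "(i, n+i) \<notin> L" "(j, n+j) \<notin> L" using ij idx
      unfolding alpha_def char_vec_def by (auto split: if_splits)
    moreover have tot: "\<And>a b. a \<in> {1..2*n} \<Longrightarrow> b \<in> {1..2*n} \<Longrightarrow> a \<noteq> b \<Longrightarrow> ((a, b) \<in> L \<longleftrightarrow> (b, a) \<notin> L)"
      using assms(2) unfolding is_linear_order_def by blast
    moreover have "i \<in> {1..2*n}" "n+i \<in> {1..2*n}" "j \<in> {1..2*n}" "n+j \<in> {1..2*n}" "i \<noteq> n+i" "j \<noteq> n+j"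
      using ij by auto
    ultimately have L1: "(n+i, i) \<in> L" "(n+j, j) \<in> L" by metis+
    have "(i, n+j) \<in> CC n E" "(j, n+i) \<in> CC n E"
      using ij e unfolding CC_def lop_idx_def by (auto simp: insert_commute)
    then have "?w (i, n+j) = 1" "?w (j, n+i) = 1" using assms(3) by auto
    then have L2: "(i, n+j) \<in> L" "(j, n+i) \<in> L" unfolding char_vec_def by (auto split: if_splits)
    have tr: "\<And>a b c. (a, b) \<in> L \<Longrightarrow> (b, c) \<in> L \<Longrightarrow> (a, c) \<in> L"
      using assms(2) unfolding is_linear_order_def by blast
    have "(n+i, n+i) \<in> L" using tr[OF tr[OF tr[OF L1(1) L2(1)] L1(2)] L2(2)] .
    then show False using assms(2) unfolding is_linear_order_def by auto
  qed
  show ?thesis unfolding SV_def using A B Cc by auto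
qed


lemma conv_sub: assumes "x \<in> S" shows "x \<in> conv S"
proof -
  have "(\<lambda>k. \<Sum>w\<in>{x}. (\<lambda>_. 1::real) w * id w k) \<in> conv S"
    by (rule conv_comb) (use assms in auto)
  then show ?thesis by simp
qed

lemma gvec_LOP: "char_vec (2*n) (lord n v) \<in> LOP (2*n)"
  unfolding LOP_def by (rule conv_sub) (use lord_lin in blast)

theorem lemma1:
  fixes n :: nat and E :: "nat set set"
  assumes "simple_graph n E"
  shows "\<exists>F \<alpha>. is_face (lop_idx (2 * n)) (LOP (2 * n)) F \<and>
              affine_map (lop_idx (2 * n)) {1..n} \<alpha> \<and> \<alpha> ` F = STAB n E"
proof -
  let ?I = "lop_idx (2*n)"
  let ?g = "\<lambda>v. char_vec (2*n) (lord n v)"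
  define H where "H = insert ((\<lambda>_. 0::real), 0::real) ((\<lambda>p. (dl p, 1)) ` CC n E)"
  define F where "F = LOP (2*n) \<inter> {x. \<forall>(a, b)\<in>H. ip ?I a x = b}"
  have CCsub: "CC n E \<subseteq> ?I" unfolding CC_def by auto
  have z: "(\<lambda>_. 0) \<in> SV n E" unfolding SV_def by auto
  have FE: "F = {x \<in> LOP (2*n). \<forall>p\<in>CC n E. x p = 1}"
  proof -
    have ipC: "\<And>p x. p \<in> CC n E \<Longrightarrow> ip ?I (dl p) x = x p" using CCsub ip_dl by blast
    have eqH: "{x. \<forall>(a, b)\<in>H. ip ?I a x = b} = {x. \<forall>p\<in>CC n E. x p = 1}"
      unfolding H_def by (auto simp: ip_zero ipC simp del: split_paired_All)
    show ?thesis unfolding F_def eqH by auto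
  qed
  have face: "is_face ?I (LOP (2*n)) F"
    unfolding is_face_def
  proof (intro exI conjI)
    show "finite H" unfolding H_def using finite_subset[OF CCsub lop_idx_fin] by simp
    show "H \<noteq> {}" unfolding H_def by simp
    show "F = LOP (2 * n) \<inter> {x. \<forall>(a, b)\<in>H. ip ?I a x = b}" by (rule F_def)
    show "\<forall>(a, b)\<in>H. supporting ?I (LOP (2 * n)) a b"
      unfolding H_def supporting_def
    proof (intro ballI, clarify)
      fix a b assume "(a, b) \<in> insert ((\<lambda>_. 0::real), 0::real) ((\<lambda>p. (dl p, 1)) ` CC n E)"
      then show "(\<exists>x\<in>LOP (2 * n). ip ?I a x = b) \<and>
         ((\<forall>x\<in>LOP (2 * n). ip ?I a x \<le> b) \<or> (\<forall>x\<in>LOP (2 * n). b \<le> ip ?I a x))"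
      proof
        assume "(a, b) = ((\<lambda>_. 0), 0)"
        then show ?thesis using gvec_LOP[of n "\<lambda>_. 0"] by (auto simp: ip_zero)
      next
        assume "(a, b) \<in> (\<lambda>p. (dl p, 1)) ` CC n E"
        then obtain p where p: "p \<in> CC n E" "a = dl p" "b = 1" by auto
        then have pI: "p \<in> ?I" using CCsub by auto
        show ?thesis using p pI gvec_LOP[of n "\<lambda>_. 0"] gvec_C[OF assms z p(1)] LOP_le1
          by (auto simp: ip_dl)
      qed
    qed
  qed
  have STABe: "STAB n E = conv (SV n E)" unfolding STAB_def SV_def ..
  have img: "alpha n ` F = STAB n E"
  proof
    show "alpha n ` F \<subseteq> STAB n E"
    proof
      fix y assume "y \<in> alpha n ` F"
      then obtain x where x: "x \<in> LOP (2*n)" "\<forall>p\<in>CC n E. x p = 1" "y = alpha n x"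
        unfolding FE by auto
      from x(1) obtain T c where T: "finite T" "T \<subseteq> {char_vec (2*n) L | L. is_linear_order (2*n) L}"
        "\<forall>v\<in>T. c v \<ge> 0" "sum c T = 1" "x = (\<lambda>k. \<Sum>v\<in>T. c v * v k)"
        unfolding LOP_def conv_def by blast
      define T' where "T' = {w \<in> T. c w \<noteq> 0}"
      have fT': "finite T'" "T' \<subseteq> T" using T(1) unfolding T'_def by auto
      have sT': "sum c T' = 1"
        using sum.mono_neutral_left[OF T(1) fT'(2), of c] T(4) unfolding T'_def by auto
      have xT': "x = (\<lambda>k. \<Sum>v\<in>T'. c v * v k)"
      proof -
        have "(\<Sum>v\<in>T'. c v * v k) = (\<Sum>v\<in>T. c v * v k)" for k
          by (rule sum.mono_neutral_left[OF T(1) fT'(2)]) (auto simp: T'_def)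
        then show ?thesis using T(5) by simp
      qed
      have ne: "T' \<noteq> {}" using sT' by auto
      have onC: "w p = 1" if w: "w \<in> T'" and p: "p \<in> CC n E" for w p
      proof -
        have "(\<Sum>v\<in>T. c v * (1 - v p)) = sum c T - (\<Sum>v\<in>T. c v * v p)"
          by (simp add: algebra_simps sum_subtractf)
        also have "\<dots> = 0" using T(4,5) x(2) p by simp
        finally have s0: "(\<Sum>v\<in>T. c v * (1 - v p)) = 0" .
        have nn: "\<forall>v\<in>T. 0 \<le> c v * (1 - v p)"
        proof
          fix v assume "v \<in> T"
          then have "v p = 0 \<or> v p = 1" "c v \<ge> 0" using T(2,3) LV_01[of v "2*n" p] by auto
          then show "0 \<le> c v * (1 - v p)" by auto
        qed
        have all0: "\<forall>v\<in>T. c v * (1 - v p) = 0"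
          using sum_nonneg_eq_0_iff[OF T(1), of "\<lambda>v. c v * (1 - v p)"] nn s0 by simp
        have "w \<in> T" using w fT'(2) by auto
        then have "c w * (1 - w p) = 0" using all0 by simp
        then show ?thesis using w unfolding T'_def by auto
      qed
      have inSV: "\<forall>w\<in>T'. alpha n w \<in> SV n E"
      proof
        fix w assume w: "w \<in> T'"
        then obtain L where L: "w = char_vec (2*n) L" "is_linear_order (2*n) L"
          using T(2) fT'(2) by blast
        show "alpha n w \<in> SV n E" using edge_alpha[OF assms L(2)] onC w L(1) by auto
      qed
      have "y = (\<lambda>k. \<Sum>w\<in>T'. c w * alpha n w k)"
        using x(3) xT' alpha_comb[OF sT'] by simp
      also have "\<dots> \<in> conv (SV n E)"
        by (rule conv_comb) (use fT' ne T(3) sT' inSV in auto)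
      finally show "y \<in> STAB n E" using STABe by simp
    qed
    show "STAB n E \<subseteq> alpha n ` F"
    proof
      fix y assume "y \<in> STAB n E"
      then obtain T c where T: "finite T" "T \<noteq> {}" "T \<subseteq> SV n E"
        "\<forall>v\<in>T. c v \<ge> 0" "sum c T = 1" "y = (\<lambda>k. \<Sum>v\<in>T. c v * v k)"
        unfolding STABe conv_def by blast
      define x where "x = (\<lambda>k. \<Sum>v\<in>T. c v * ?g v k)"
      have xL: "x \<in> LOP (2*n)" unfolding x_def LOP_def
        by (rule conv_comb) (use T lord_lin in auto)
      have xC: "\<forall>p\<in>CC n E. x p = 1"
      proof
        fix p assume p: "p \<in> CC n E"
        have "(\<Sum>v\<in>T. c v * ?g v p) = (\<Sum>v\<in>T. c v)"
          by (rule sum.cong) (use T(3) gvec_C[OF assms _ p] in auto)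
        then show "x p = 1" using T(5) unfolding x_def by simp
      qed
      have "alpha n x = (\<lambda>k. \<Sum>v\<in>T. c v * alpha n (?g v) k)"
        unfolding x_def by (rule alpha_comb2[OF T(5)])
      also have "\<dots> = y"
      proof -
        have ga: "\<forall>v\<in>T. alpha n (?g v) = v" using T(3) gvec_alpha by blast
        show ?thesis unfolding T(6) by (intro ext sum.cong refl) (simp add: ga)
      qed
      finally show "y \<in> alpha n ` F" using xL xC unfolding FE by auto
    qed
  qed
  show ?thesis using face alpha_affine img by blast
qed

end
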